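(* For every decision $\delta=(\delta_0,\delta_1)$ with $0<\delta_1<\delta_0<1$ there exists a decision $\delta'=(\delta'_0,\delta'_1)$ with $0<\delta'_0<\delta'_1<1$ such that $R_{\delta'}(\theta)<R_\delta(\theta)$ for every $\theta\in[0,1]$.
   Context: Bernoulli model: for $\theta\in[0,1]$, $p_\theta(x)=\theta^x(1-\theta)^{1-x}$, $x\in\{0,1\}$. A nonrandomized decision is a pair $\delta=(\delta_0,\delta_1)\in[0,1]^2$, used as the predictive distribution $p_\delta(y\mid x)=\delta_x^{\,y}(1-\delta_x)^{1-y}$ for a future $y\in\{0,1\}$ after observing $x$. The Kullback–Leibler risk is $R_\delta(\theta)=-S(\theta)+\theta^2\log\frac1{\delta_1}+\theta(1-\theta)\log\frac1{1-\delta_1}+\theta(1-\theta)\log\frac1{\delta_0}+(1-\theta)^2\log\frac1{1-\delta_0}$, where $S(\theta)=-\theta\log\theta-(1-\theta)\log(1-\theta)$ (with $0\log 0=0$) is the binary entropy. *)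

theory Defs
  imports Complex_Main
begin

definition xlogx :: "real \<Rightarrow> real" where
  "xlogx x = (if x = 0 then 0 else x * ln x)"

definition bin_entropy :: "real \<Rightarrow> real" where
  "bin_entropy \<theta> = - xlogx \<theta> - xlogx (1 - \<theta>)"

definition KL_risk :: "real \<times> real \<Rightarrow> real \<Rightarrow> real" where
  "KL_risk d \<theta> = (case d of (d0, d1) \<Rightarrow>
      - bin_entropy \<theta>
      + \<theta>^2 * ln (1 / d1)
      + \<theta> * (1 - \<theta>) * ln (1 / (1 - d1))
      + \<theta> * (1 - \<theta>) * ln (1 / d0)
      + (1 - \<theta>)^2 * ln (1 / (1 - d0)))"

end

theory Submission
  imports Defs
begin

lemma risk_diff:
  assumes "0 < d0" "d0 < 1" "0 < d1" "d1 < 1" "0 < e0" "e0 < 1" "0 < e1" "e1 < 1"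
  shows "KL_risk (d0, d1) t - KL_risk (e0, e1) t =
    (ln e1 - ln d1) * t^2 + (ln e0 - ln d0 + ln (1-e1) - ln (1-d1)) * (t*(1-t))
    + (ln (1-e0) - ln (1-d0)) * (1-t)^2"
  using assms by (simp add: KL_risk_def ln_div algebra_simps)

lemma distr: "((X::real) * a + (Y + Z) * b + W * d) * M = (X*M)*a + (Y*M + Z*M)*b + (W*M)*d"
  by (simp add: algebra_simps)

lemma divhelp: "(X::real) * M = Y \<Longrightarrow> M \<noteq> 0 \<Longrightarrow> X = Y / M"
  by (simp add: field_simps)

lemma neg_ln_ge: "0 < (z::real) \<Longrightarrow> 1 - z \<le> - ln z"
  using ln_le_minus_one by force

lemma neg_ln_gt: "0 < (z::real) \<Longrightarrow> z \<noteq> 1 \<Longrightarrow> 1 - z < - ln z"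
  using ln_le_minus_one ln_eq_minus_one by force

lemma const_pos:
  fixes d0 d1 c t :: real
  assumes pos: "0 < d1" "d1 < d0" "d0 < 1" and c: "c = d0 / (1 + (d0 - d1))"
    and t: "0 \<le> t" "t \<le> 1"
  shows "(ln c - ln d1) * t^2 + ((ln c - ln d0) + (ln (1-c) - ln (1-d1))) * (t*(1-t))
    + (ln (1-c) - ln (1-d0)) * (1-t)^2 > 0"
proof -
  have den: "1 < 1 + (d0 - d1)" using assms by simp
  have "d1 * (1 + (d0 - d1)) < d0"
  proof -
    have "d1 * (d0 - d1) < 1 * (d0 - d1)" using assms by (intro mult_strict_right_mono) auto
    then show ?thesis by (simp add: algebra_simps)
  qed
  then have c0: "0 < c" "c < 1" "d1 < c" "c < d0"
    using assms den by (auto simp: c pos_less_divide_eq pos_divide_less_eq)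
  have e1: "ln c - ln d1 = - ln (d1/c)" using c0 pos by (simp add: ln_div)
  have e2: "ln c - ln d0 = - ln (d0/c)" using c0 pos by (simp add: ln_div)
  have e3: "ln (1-c) - ln (1-d1) = - ln ((1-d1)/(1-c))" using c0 pos by (simp add: ln_div)
  have e4: "ln (1-c) - ln (1-d0) = - ln ((1-d0)/(1-c))" using c0 pos by (simp add: ln_div)
  have w1: "0 \<le> t^2" "0 \<le> t*(1-t)" "0 \<le> (1-t)^2" using t by auto
  have i1: "(1 - d1/c) * t^2 \<le> - ln (d1/c) * t^2"
    by (rule mult_right_mono[OF neg_ln_ge w1(1)]) (use c0 pos in auto)
  have i2: "(1 - d0/c) * (t*(1-t)) \<le> - ln (d0/c) * (t*(1-t))"
    by (rule mult_right_mono[OF neg_ln_ge w1(2)]) (use c0 pos in auto)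
  have i3: "(1 - (1-d1)/(1-c)) * (t*(1-t)) \<le> - ln ((1-d1)/(1-c)) * (t*(1-t))"
    by (rule mult_right_mono[OF neg_ln_ge w1(2)]) (use c0 pos in auto)
  have i4: "(1 - (1-d0)/(1-c)) * (1-t)^2 \<le> - ln ((1-d0)/(1-c)) * (1-t)^2"
    by (rule mult_right_mono[OF neg_ln_ge w1(3)]) (use c0 pos in auto)
  have alg: "(1 - d1/c) * t^2 + ((1 - d0/c) + (1 - (1-d1)/(1-c))) * (t*(1-t))
     + (1 - (1-d0)/(1-c)) * (1-t)^2 = (d0 - d1) * (c - t)^2 / (c * (1 - c))"
  proof -
    have "c * (1 + (d0 - d1)) = d0" using den by (simp add: c)
    then have h: "c + c*d0 - c*d1 - d0 = 0" by (simp add: algebra_simps)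
    have cz: "c \<noteq> 0" "1 - c \<noteq> 0" using c0 by auto
    have "((1 - d1/c) * t^2 + ((1 - d0/c) + (1 - (1-d1)/(1-c))) * (t*(1-t))
     + (1 - (1-d0)/(1-c)) * (1-t)^2) * (c * (1 - c))
      = (d0 - d1) * (c - t)^2 + (c + c*d0 - c*d1 - d0) * (t - c)"
    proof -
      have a1: "(1 - d1/c) * (c * (1 - c)) = (c - d1) * (1 - c)" using cz by (simp add: field_simps)
      have a2: "(1 - d0/c) * (c * (1 - c)) = (c - d0) * (1 - c)" using cz by (simp add: field_simps)
      have a3: "(1 - (1-d1)/(1-c)) * (c * (1 - c)) = c * (d1 - c)" using cz by (simp add: field_simps)
      have a4: "(1 - (1-d0)/(1-c)) * (c * (1 - c)) = c * (d0 - c)" using cz by (simp add: field_simps)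
      have "((1 - d1/c) * t^2 + ((1 - d0/c) + (1 - (1-d1)/(1-c))) * (t*(1-t))
     + (1 - (1-d0)/(1-c)) * (1-t)^2) * (c * (1 - c))
       = ((1 - d1/c) * (c * (1 - c))) * t^2 + ((1 - d0/c) * (c * (1 - c)) + (1 - (1-d1)/(1-c)) * (c * (1 - c))) * (t*(1-t))
     + ((1 - (1-d0)/(1-c)) * (c * (1 - c))) * (1-t)^2" by (rule distr)
      also have "\<dots> = (c - d1) * (1 - c) * t^2 + ((c - d0) * (1 - c) + c * (d1 - c)) * (t*(1-t))
         + c * (d0 - c) * (1-t)^2" unfolding a1 a2 a3 a4 ..
      also have "\<dots> = (d0 - d1) * (c - t)^2 + (c + c*d0 - c*d1 - d0) * (t - c)"
        by (simp add: algebra_simps power2_eq_square)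
      finally show ?thesis .
    qed
    then have "((1 - d1/c) * t^2 + ((1 - d0/c) + (1 - (1-d1)/(1-c))) * (t*(1-t))
     + (1 - (1-d0)/(1-c)) * (1-t)^2) * (c * (1 - c)) = (d0 - d1) * (c - t)^2" using h by simp
    moreover have "c * (1 - c) \<noteq> 0" using cz by simp
    ultimately show ?thesis by (rule divhelp)
  qed
  have sp1: "(- ln (d0/c) + - ln ((1-d1)/(1-c))) * (t*(1-t)) = - ln (d0/c) * (t*(1-t)) + - ln ((1-d1)/(1-c)) * (t*(1-t))"
    by (rule distrib_right)
  have sp2: "((1 - d0/c) + (1 - (1-d1)/(1-c))) * (t*(1-t)) = (1 - d0/c) * (t*(1-t)) + (1 - (1-d1)/(1-c)) * (t*(1-t))"
    by (rule distrib_right)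
  have goal: "?thesis \<longleftrightarrow> 0 < - ln (d1/c) * t^2 + (- ln (d0/c) + - ln ((1-d1)/(1-c))) * (t*(1-t)) + - ln ((1-d0)/(1-c)) * (1-t)^2"
    unfolding e1 e2 e3 e4 by (rule refl)
  have main: "0 < - ln (d1/c) * t^2 + (- ln (d0/c) + - ln ((1-d1)/(1-c))) * (t*(1-t)) + - ln ((1-d0)/(1-c)) * (1-t)^2"
  proof (cases "t = c")
    case False
    have "0 < (d0 - d1) * (c - t)^2 / (c * (1 - c))"
      using False c0 pos by (intro divide_pos_pos mult_pos_pos) auto
    then show ?thesis using i1 i2 i3 i4 alg sp1 sp2 by linarith
  next
    case True
    have "0 < t*(1-t)" using True c0 by auto
    then have i2': "(1 - d0/c) * (t*(1-t)) < - ln (d0/c) * (t*(1-t))"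
      by (intro mult_strict_right_mono neg_ln_gt) (use c0 pos in auto)
    have "0 \<le> (d0 - d1) * (c - t)^2 / (c * (1 - c))"
      using c0 pos by (intro divide_nonneg_pos mult_nonneg_nonneg) auto
    then show ?thesis using i1 i2' i3 i4 alg sp1 sp2 by linarith
  qed
  then show ?thesis using goal by blast
qed

lemma disc_pos:
  fixes P Q R :: real
  assumes P: "0 < P" and Q: "0 < Q"
    and H: "\<forall>t\<in>{0..1}. 0 < P * t^2 + R * (t*(1-t)) + Q * (1-t)^2"
  shows "0 < R + 2 * sqrt (P * Q)"
proof -
  define a where "a = sqrt P"
  define b where "b = sqrt Q"
  have a: "0 < a" "a^2 = P" using P by (auto simp: a_def)
  have b: "0 < b" "b^2 = Q" using Q by (auto simp: b_def)
  have sq: "sqrt (P * Q) = a * b" by (simp add: a_def b_def real_sqrt_mult)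
  define t where "t = b / (a + b)"
  have t01: "t \<in> {0..1}" using a b by (auto simp: t_def field_simps)
  have t1: "1 - t = a / (a + b)" using a b by (simp add: t_def field_simps)
  have "0 < P * t^2 + R * (t*(1-t)) + Q * (1-t)^2" using H t01 by blast
  also have "P * t^2 + R * (t*(1-t)) + Q * (1-t)^2 = a * b * (R + 2 * (a * b)) / (a + b)^2"
    unfolding t1 unfolding t_def using a(1) b(1) unfolding a(2)[symmetric] b(2)[symmetric]
    by (simp add: field_simps power2_eq_square) (simp add: add_divide_distrib)
  finally have "0 < a * b * (R + 2 * (a * b)) / (a + b)^2" .
  then have "0 < a * b * (R + 2 * (a * b))" using a b
    by (simp add: zero_less_divide_iff)
  moreover have "0 < a * b" using a b by simp
  ultimately show ?thesis using sq by (simp add: zero_less_mult_iff)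
qed

lemma form_pos:
  fixes P Q R t :: real
  assumes P: "0 < P" and Q: "0 < Q" and H: "0 < R + 2 * sqrt (P * Q)"
    and t: "0 \<le> t" "t \<le> 1"
  shows "0 < P * t^2 + R * (t*(1-t)) + Q * (1-t)^2"
proof -
  define a where "a = sqrt P"
  define b where "b = sqrt Q"
  have a: "0 < a" "a^2 = P" using P by (auto simp: a_def)
  have b: "0 < b" "b^2 = Q" using Q by (auto simp: b_def)
  have sq: "sqrt (P * Q) = a * b" by (simp add: a_def b_def real_sqrt_mult)
  have id: "P * t^2 + R * (t*(1-t)) + Q * (1-t)^2 = (a*t - b*(1-t))^2 + (R + 2*(a*b)) * (t*(1-t))"
    unfolding a(2)[symmetric] b(2)[symmetric] by (simp add: power2_eq_square algebra_simps)
  show ?thesis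
  proof (cases "t = 0 \<or> t = 1")
    case True then show ?thesis using P Q by auto
  next
    case False
    then have "0 < t*(1-t)" using t by auto
    then have "0 < (R + 2*(a*b)) * (t*(1-t))" using H sq by simp
    then show ?thesis unfolding id by (simp add: add_nonneg_pos)
  qed
qed

theorem mainTheorem3:
  fixes d0 d1 :: real
  assumes "0 < d1" and "d1 < d0" and "d0 < 1"
  shows "\<exists>e0 e1 :: real. 0 < e0 \<and> e0 < e1 \<and> e1 < 1 \<and>
           (\<forall>\<theta>\<in>{0..1}. KL_risk (e0, e1) \<theta> < KL_risk (d0, d1) \<theta>)"
proof -
  define c where "c = d0 / (1 + (d0 - d1))"
  have den: "1 < 1 + (d0 - d1)" using assms by simp
  have "d1 * (1 + (d0 - d1)) < d0"
  proof -
    have "d1 * (d0 - d1) < 1 * (d0 - d1)" using assms by (intro mult_strict_right_mono) auto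
    then show ?thesis by (simp add: algebra_simps)
  qed
  then have c0: "0 < c" "c < 1" "d1 < c" "c < d0"
    using assms den by (auto simp: c_def pos_less_divide_eq pos_divide_less_eq)
  define Q where "Q = ln (1-c) - ln (1-d0)"
  have Q: "0 < Q" using c0 assms by (simp add: Q_def)
  define h where "h = (\<lambda>x. ((ln c - ln d0) + (ln (1-x) - ln (1-d1))) + 2 * sqrt ((ln x - ln d1) * Q))"
  have Pc: "0 < ln c - ln d1" using c0 assms by simp
  have hc: "0 < h c"
    unfolding h_def
    by (rule disc_pos[OF Pc Q]) (use const_pos[OF assms c_def] in \<open>auto simp: Q_def\<close>)
  have cont: "isCont h c"
    unfolding h_def using c0 by (intro continuous_intros) auto
  then have "(h \<longlongrightarrow> h c) (at_right c)"
    by (simp add: isCont_def filterlim_at_split)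
  then have ev1: "eventually (\<lambda>x. 0 < h x) (at_right c)" using hc by (rule order_tendstoD)
  have ev2: "eventually (\<lambda>x. x < 1) (at_right c)"
    unfolding eventually_at_right_field using c0 by blast
  have ev3: "eventually (\<lambda>x. c < x) (at_right c)" by (rule eventually_at_right_less)
  have "eventually (\<lambda>x. 0 < h x \<and> x < 1 \<and> c < x) (at_right c)"
    using ev1 ev2 ev3 by eventually_elim auto
  then obtain x where x: "0 < h x" "x < 1" "c < x"
    using eventually_happens' [of "at_right c"] by auto
  have Px: "0 < ln x - ln d1" using x c0 assms by simp
  show ?thesis
  proof (intro exI conjI ballI)
    show "0 < c" "c < x" "x < 1" using c0 x by auto
    fix t :: real assume t: "t \<in> {0..1}"
    have "0 < (ln x - ln d1) * t^2 + ((ln c - ln d0) + (ln (1-x) - ln (1-d1))) * (t*(1-t)) + Q * (1-t)^2"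
      by (rule form_pos[OF Px Q]) (use x t in \<open>auto simp: h_def\<close>)
    moreover have "KL_risk (d0, d1) t - KL_risk (c, x) t =
      (ln x - ln d1) * t^2 + ((ln c - ln d0) + (ln (1-x) - ln (1-d1))) * (t*(1-t)) + Q * (1-t)^2"
      unfolding Q_def using risk_diff[of d0 d1 c x t] c0 x assms by (simp add: algebra_simps)
    ultimately show "KL_risk (c, x) t < KL_risk (d0, d1) t" by linarith
  qed
qed

end
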